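(* Let $w\in[k]^n$ and let $m$ be a positive integer. If $\mathrm{LT}(w)\geq m$, then $w$ contains regular twins of length $m$.
   Context: $[k]=\{1,\dots,k\}$; $w[i]$ is the $i$-th letter of $w$. Two subsequences of $w$ are twins if they are equal as words and use disjoint sets of positions of $w$; $\mathrm{LT}(w)$ is the maximum length of twins in $w$. Twins $(w_1,w_2)$ are monotone if, for every $i$, the $i$-th letter of $w_1$ occurs in $w$ before the $i$-th letter of $w_2$. For monotone twins define $R=R(w_1,w_2,w)\in\{0,1,2\}^n$ by $R[i]=0$ if position $i$ is in neither twin, $R[i]=1$ if it is in $w_1$, $R[i]=2$ if it is in $w_2$. Monotone twins $(w_1,w_2)$ are regular if (a) there are no $i<j$ with $R[i]=2$, $R[j]=1$, $R[k']=0$ for all $i<k'<j$, and $w[i]=w[j]$; and (b) there are no $i<j$ with $R[i]\in\{1,2\}$, $R[j]=0$, $R[k']=0$ for all $i<k'<j$, and $w[i]=w[j]$. *)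

theory Defs
  imports Main
begin

text \<open>Words are lists; positions are 0-based indices \<open>0..<length w\<close>.
  A pair of twins is given by the two (disjoint) sets of positions used.\<close>

definition twins :: "'a list \<Rightarrow> nat set \<Rightarrow> nat set \<Rightarrow> bool" where
  "twins w I J \<longleftrightarrow> I \<subseteq> {..<length w} \<and> J \<subseteq> {..<length w} \<and> I \<inter> J = {}
     \<and> nths w I = nths w J"

definition LT :: "'a list \<Rightarrow> nat" where
  "LT w = Max {card I | I J. twins w I J}"

definition mono_twins :: "'a list \<Rightarrow> nat set \<Rightarrow> nat set \<Rightarrow> bool" where
  "mono_twins w I J \<longleftrightarrow> twins w I J \<and>
     (\<forall>i < card I. sorted_list_of_set I ! i < sorted_list_of_set J ! i)"

definition Rw :: "nat set \<Rightarrow> nat set \<Rightarrow> nat \<Rightarrow> nat" where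
  "Rw I J i = (if i \<in> I then 1 else if i \<in> J then 2 else 0)"

definition regular_twins :: "'a list \<Rightarrow> nat set \<Rightarrow> nat set \<Rightarrow> bool" where
  "regular_twins w I J \<longleftrightarrow> mono_twins w I J \<and>
     \<not> (\<exists>i j. i < j \<and> j < length w \<and> Rw I J i = 2 \<and> Rw I J j = 1 \<and>
            (\<forall>k. i < k \<and> k < j \<longrightarrow> Rw I J k = 0) \<and> w ! i = w ! j) \<and>
     \<not> (\<exists>i j. i < j \<and> j < length w \<and> Rw I J i \<in> {1, 2} \<and> Rw I J j = 0 \<and>
            (\<forall>k. i < k \<and> k < j \<longrightarrow> Rw I J k = 0) \<and> w ! i = w ! j)"

end

theory Submission
  imports Defs
begin


lemma nths_set_strict:
  assumes "sorted_wrt (<) xs" "set xs \<subseteq> {..<length w}"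
  shows "nths w (set xs) = map (nth w) xs"
proof -
  have w: "w = map (nth w) [0..<length w]" by (simp add: map_nth)
  have "nths [0..<length w] (set xs) = filter (\<lambda>i. i \<in> set xs) [0..<length w]"
    by (subst filter_eq_nths) (use assms in \<open>auto intro!: arg_cong2[where f=nths]\<close>)
  also have "\<dots> = xs"
    apply (rule sorted_distinct_set_unique)
    using assms by (auto simp: strict_sorted_iff sorted_filter[where f=id, simplified])
  finally have "nths [0..<length w] (set xs) = xs" .
  then show ?thesis by (subst w) (simp add: nths_map)
qed

lemma sls_set_strict:
  assumes "sorted_wrt (<) xs" shows "sorted_list_of_set (set xs) = xs"
  using assms by (metis sorted_list_of_set.finite_set_strict_sorted strict_sorted_equal finite_set
     sorted_list_of_set.set_sorted_key_list_of_set strict_sorted_list_of_set)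



definition TP :: "'a list \<Rightarrow> nat \<Rightarrow> nat list \<Rightarrow> nat list \<Rightarrow> bool" where
"TP w m xs ys \<longleftrightarrow> length xs = m \<and> length ys = m \<and> sorted_wrt (<) xs \<and> sorted_wrt (<) ys \<and>
   (\<forall>t<m. xs!t < ys!t \<and> w!(xs!t) = w!(ys!t)) \<and> set xs \<inter> set ys = {} \<and> set ys \<subseteq> {..<length w}"

lemma sum_list_upd: "q < length xs \<Longrightarrow> sum_list (xs[q:=v]) + xs!q = sum_list xs + (v::nat)"
  by (induction xs arbitrary: q) (auto split: nat.splits)

lemma sum_list_le: "(\<forall>x\<in>set xs. x \<le> (n::nat)) \<Longrightarrow> sum_list xs \<le> length xs * n"
  by (induction xs) auto

lemma swap_a:
  assumes T: "TP w m xs ys" and ij: "i < j" "j < length w" and i: "i \<notin> set xs" "i \<in> set ys"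
    and j: "j \<in> set xs" and gap: "\<forall>k. i < k \<and> k < j \<longrightarrow> k \<notin> set xs \<and> k \<notin> set ys"
    and wij: "w!i = w!j"
  shows "\<exists>xs' ys'. TP w m xs' ys' \<and> sum_list xs' + sum_list ys' = sum_list xs + sum_list ys
            \<and> sum_list xs' < sum_list xs"
proof -
  have lx: "length xs = m" and ly: "length ys = m" and sx: "sorted_wrt (<) xs" and sy: "sorted_wrt (<) ys"
    and pt: "\<forall>t<m. xs!t < ys!t \<and> w!(xs!t) = w!(ys!t)" and dj: "set xs \<inter> set ys = {}"
    and bd: "set ys \<subseteq> {..<length w}" using T by (auto simp: TP_def)
  have hx: "\<And>a b. a < b \<Longrightarrow> b < m \<Longrightarrow> xs!a < xs!b" using sx lx by (auto simp: sorted_wrt_iff_nth_less)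
  have hy: "\<And>a b. a < b \<Longrightarrow> b < m \<Longrightarrow> ys!a < ys!b" using sy ly by (auto simp: sorted_wrt_iff_nth_less)
  have hx2: "\<And>a b. a < m \<Longrightarrow> b < m \<Longrightarrow> xs!a = xs!b \<Longrightarrow> a = b" by (metis hx less_irrefl nat_neq_iff)
  have hy2: "\<And>a b. a < m \<Longrightarrow> b < m \<Longrightarrow> ys!a = ys!b \<Longrightarrow> a = b" by (metis hy less_irrefl nat_neq_iff)
  have d2: "\<And>a b. a < m \<Longrightarrow> b < m \<Longrightarrow> xs!a \<noteq> ys!b" using dj lx ly by (metis disjoint_iff nth_mem)
  have gx: "\<And>a. a < m \<Longrightarrow> xs!a \<le> i \<or> j \<le> xs!a" using gap lx by (metis not_le nth_mem)
  have gy: "\<And>a. a < m \<Longrightarrow> ys!a \<le> i \<or> j \<le> ys!a" using gap ly by (metis not_le nth_mem)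
  have ix: "\<And>a. a < m \<Longrightarrow> xs!a \<noteq> i" using i lx by (metis nth_mem)
  have jy: "\<And>a. a < m \<Longrightarrow> ys!a \<noteq> j" using j dj ly by (metis disjoint_iff nth_mem)
  obtain q where q: "q < m" "xs!q = j" using j lx by (metis in_set_conv_nth)
  obtain p where p: "p < m" "ys!p = i" using i ly by (metis in_set_conv_nth)
  define xs' where "xs' = xs[q:=i]"
  define ys' where "ys' = ys[p:=j]"
  have nx: "\<And>a. a < m \<Longrightarrow> xs'!a = (if a = q then i else xs!a)" unfolding xs'_def using lx q by auto
  have ny: "\<And>a. a < m \<Longrightarrow> ys'!a = (if a = p then j else ys!a)" unfolding ys'_def using ly p by auto
  have "sorted_wrt (<) xs'"
    unfolding sorted_wrt_iff_nth_less
  proof (intro allI impI)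
    fix a b assume ab: "a < b" "b < length xs'"
    then have b: "b < m" using lx by (simp add: xs'_def)
    show "xs'!a < xs'!b"
    proof (cases "a = q")
      case True then show ?thesis using ab b nx hx[of q b] q ij by auto
    next
      case False
      show ?thesis
      proof (cases "b = q")
        case True
        have "xs!a < j" using hx[of a q] ab True q by auto
        then have "xs!a < i" using gx[of a] ix[of a] ab b by force
        then show ?thesis using nx True False ab b by auto
      next
        case False2: False
        then show ?thesis using nx False hx ab b by auto
      qed
    qed
  qed
  moreover have "sorted_wrt (<) ys'"
    unfolding sorted_wrt_iff_nth_less
  proof (intro allI impI)
    fix a b assume ab: "a < b" "b < length ys'"
    then have b: "b < m" using ly by (simp add: ys'_def)
    show "ys'!a < ys'!b"
    proof (cases "a = p")
      case True
      have "ys!b > i" using hy[of p b] ab b True p by auto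
      then have "ys!b > j" using gy[of b] jy[of b] b by force
      then show ?thesis using True ab b ny by auto
    next
      case False
      show ?thesis
      proof (cases "b = p")
        case True
        have "ys!a < i" using hy[of a p] ab True p by auto
        then show ?thesis using ny True False ab b ij by auto
      next
        case False2: False
        then show ?thesis using ny False hy ab b by auto
      qed
    qed
  qed
  moreover have "\<forall>t<m. xs'!t < ys'!t \<and> w!(xs'!t) = w!(ys'!t)"
  proof (intro allI impI)
    fix t assume t: "t < m"
    have A: "xs!q < ys!q" "w!(xs!q) = w!(ys!q)" using pt q by auto
    have B: "xs!p < ys!p" "w!(xs!p) = w!(ys!p)" using pt p by auto
    have C: "xs!t < ys!t" "w!(xs!t) = w!(ys!t)" using pt t by auto
    show "xs'!t < ys'!t \<and> w!(xs'!t) = w!(ys'!t)"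
    proof (cases "t = q")
      case True
      show ?thesis
      proof (cases "t = p")
        case True2: True
        then show ?thesis using nx[OF t] ny[OF t] True ij wij by simp
      next
        case False
        then show ?thesis using nx[OF t] ny[OF t] True A q ij wij by simp
      qed
    next
      case False
      show ?thesis
      proof (cases "t = p")
        case True2: True
        then show ?thesis using nx[OF t] ny[OF t] False B p ij wij by simp
      next
        case False2: False
        then show ?thesis using nx[OF t] ny[OF t] False C by simp
      qed
    qed
  qed
  moreover have "set xs' \<inter> set ys' = {}"
  proof -
    have "\<And>a b. a < m \<Longrightarrow> b < m \<Longrightarrow> xs'!a \<noteq> ys'!b"
    proof -
      fix a b assume ab: "a < m" "b < m"
      show "xs'!a \<noteq> ys'!b"
      proof (cases "a = q"; cases "b = p")
        assume "a = q" "b = p" then show ?thesis using nx[OF ab(1)] ny[OF ab(2)] ij by simp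
      next
        assume "a = q" "b \<noteq> p" then show ?thesis using nx[OF ab(1)] ny[OF ab(2)] hy2[OF ab(2) p(1)] p by auto
      next
        assume "a \<noteq> q" "b = p" then show ?thesis using nx[OF ab(1)] ny[OF ab(2)] hx2[OF ab(1) q(1)] q by auto
      next
        assume "a \<noteq> q" "b \<noteq> p" then show ?thesis using nx[OF ab(1)] ny[OF ab(2)] d2[OF ab] by auto
      qed
    qed
    moreover have "length xs' = m" "length ys' = m" using lx ly by (auto simp: xs'_def ys'_def)
    ultimately show ?thesis by (metis disjoint_iff in_set_conv_nth)
  qed
  moreover have "set ys' \<subseteq> {..<length w}" using bd ij unfolding ys'_def
    by (metis lessThan_iff order.strict_trans set_update_subset_insert insert_subset subset_trans)
  ultimately have "TP w m xs' ys'" using lx ly by (auto simp: TP_def xs'_def ys'_def)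
  moreover have "sum_list xs' + j = sum_list xs + i" using sum_list_upd[of q xs i] q lx by (simp add: xs'_def)
  moreover have "sum_list ys' + i = sum_list ys + j" using sum_list_upd[of p ys j] p ly by (simp add: ys'_def)
  ultimately show ?thesis using ij by (intro exI[of _ xs'] exI[of _ ys']) auto
qed



lemma TP_facts:
  assumes T: "TP w m xs ys"
  shows "length xs = m" "length ys = m"
    "\<And>a b. a < b \<Longrightarrow> b < m \<Longrightarrow> xs!a < xs!b"
    "\<And>a b. a < b \<Longrightarrow> b < m \<Longrightarrow> ys!a < ys!b"
    "\<And>t. t < m \<Longrightarrow> xs!t < ys!t" "\<And>t. t < m \<Longrightarrow> w!(xs!t) = w!(ys!t)"
    "set xs \<inter> set ys = {}" "set ys \<subseteq> {..<length w}"
  using T by (auto simp: TP_def sorted_wrt_iff_nth_less)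

lemma swap_b1:
  assumes T: "TP w m xs ys" and ij: "i < j" "j < length w" and i: "i \<in> set xs"
    and j: "j \<notin> set xs" "j \<notin> set ys" and gap: "\<forall>k. i < k \<and> k < j \<longrightarrow> k \<notin> set xs \<and> k \<notin> set ys"
    and wij: "w!i = w!j"
  shows "\<exists>xs' ys'. TP w m xs' ys' \<and> sum_list xs' + sum_list ys' > sum_list xs + sum_list ys"
proof -
  note F = TP_facts[OF T]
  obtain q where q: "q < m" "xs!q = i" using i F(1) by (metis in_set_conv_nth)
  define xs' where "xs' = xs[q:=j]"
  have nx: "\<And>a. a < m \<Longrightarrow> xs'!a = (if a = q then j else xs!a)" unfolding xs'_def using F(1) q by auto
  have gx: "\<And>a. a < m \<Longrightarrow> xs!a \<le> i \<or> j \<le> xs!a" using gap F(1) by (metis not_le nth_mem)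
  have gy: "\<And>a. a < m \<Longrightarrow> ys!a \<le> i \<or> j \<le> ys!a" using gap F(2) by (metis not_le nth_mem)
  have jx: "\<And>a. a < m \<Longrightarrow> xs!a \<noteq> j" using j F(1) by (metis nth_mem)
  have jy: "\<And>a. a < m \<Longrightarrow> ys!a \<noteq> j" using j F(2) by (metis nth_mem)
  have "sorted_wrt (<) xs'"
    unfolding sorted_wrt_iff_nth_less
  proof (intro allI impI)
    fix a b assume ab: "a < b" "b < length xs'"
    then have b: "b < m" using F(1) by (simp add: xs'_def)
    show "xs'!a < xs'!b"
    proof (cases "a = q")
      case True
      have "xs!b > i" using F(3)[of q b] ab b True q by auto
      then have "xs!b > j" using gx[of b] jx[of b] b by force
      then show ?thesis using True ab b nx by auto
    next
      case False
      show ?thesis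
      proof (cases "b = q")
        case True
        have "xs!a < i" using F(3)[of a q] ab True q by auto
        then show ?thesis using nx True False ab b ij by auto
      next
        case False2: False
        then show ?thesis using nx[of a] nx[of b] False F(3)[OF ab(1) b] ab b by auto
      qed
    qed
  qed
  moreover have "\<forall>t<m. xs'!t < ys!t \<and> w!(xs'!t) = w!(ys!t)"
  proof (intro allI impI)
    fix t assume t: "t < m"
    show "xs'!t < ys!t \<and> w!(xs'!t) = w!(ys!t)"
    proof (cases "t = q")
      case True
      have "ys!t > i" using F(5)[OF t] True q by auto
      then have "ys!t > j" using gy[OF t] jy[OF t] by force
      then show ?thesis using nx[OF t] True F(6)[OF t] q wij by auto
    next
      case False then show ?thesis using nx[OF t] F(5,6)[OF t] by auto
    qed
  qed
  moreover have "set xs' \<inter> set ys = {}"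
    using set_update_subset_insert[of xs q j] F(7) j(2) unfolding xs'_def by blast
  ultimately have "TP w m xs' ys" using T by (auto simp: TP_def xs'_def)
  moreover have "sum_list xs' + i = sum_list xs + j" using sum_list_upd[of q xs j] q F(1) by (simp add: xs'_def)
  ultimately show ?thesis using ij by (intro exI[of _ xs'] exI[of _ ys]) auto
qed

lemma swap_b2:
  assumes T: "TP w m xs ys" and ij: "i < j" "j < length w" and i: "i \<in> set ys"
    and j: "j \<notin> set xs" "j \<notin> set ys" and gap: "\<forall>k. i < k \<and> k < j \<longrightarrow> k \<notin> set xs \<and> k \<notin> set ys"
    and wij: "w!i = w!j"
  shows "\<exists>xs' ys'. TP w m xs' ys' \<and> sum_list xs' + sum_list ys' > sum_list xs + sum_list ys"
proof -
  note F = TP_facts[OF T]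
  obtain p where p: "p < m" "ys!p = i" using i F(2) by (metis in_set_conv_nth)
  define ys' where "ys' = ys[p:=j]"
  have ny: "\<And>a. a < m \<Longrightarrow> ys'!a = (if a = p then j else ys!a)" unfolding ys'_def using F(2) p by auto
  have gy: "\<And>a. a < m \<Longrightarrow> ys!a \<le> i \<or> j \<le> ys!a" using gap F(2) by (metis not_le nth_mem)
  have jy: "\<And>a. a < m \<Longrightarrow> ys!a \<noteq> j" using j F(2) by (metis nth_mem)
  have "sorted_wrt (<) ys'"
    unfolding sorted_wrt_iff_nth_less
  proof (intro allI impI)
    fix a b assume ab: "a < b" "b < length ys'"
    then have b: "b < m" using F(2) by (simp add: ys'_def)
    show "ys'!a < ys'!b"
    proof (cases "a = p")
      case True
      have "ys!b > i" using F(4)[of p b] ab b True p by auto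
      then have "ys!b > j" using gy[of b] jy[of b] b by force
      then show ?thesis using True ab b ny by auto
    next
      case False
      show ?thesis
      proof (cases "b = p")
        case True
        have "ys!a < i" using F(4)[of a p] ab True p by auto
        then show ?thesis using ny True False ab b ij by auto
      next
        case False2: False
        then show ?thesis using ny[of a] ny[of b] False F(4)[OF ab(1) b] ab b by auto
      qed
    qed
  qed
  moreover have "\<forall>t<m. xs!t < ys'!t \<and> w!(xs!t) = w!(ys'!t)"
  proof (intro allI impI)
    fix t assume t: "t < m"
    show "xs!t < ys'!t \<and> w!(xs!t) = w!(ys'!t)"
    proof (cases "t = p")
      case True
      then show ?thesis using ny[OF t] True F(5,6)[OF t] p wij ij by auto
    next
      case False then show ?thesis using ny[OF t] F(5,6)[OF t] by auto
    qed
  qed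
  moreover have "set xs \<inter> set ys' = {}"
    using set_update_subset_insert[of ys p j] F(7) j(1) unfolding ys'_def by blast
  moreover have "set ys' \<subseteq> {..<length w}" using F(8) ij set_update_subset_insert[of ys p j] unfolding ys'_def
    by auto
  ultimately have "TP w m xs ys'" using T by (auto simp: TP_def ys'_def)
  moreover have "sum_list ys' + i = sum_list ys + j" using sum_list_upd[of p ys j] p F(2) by (simp add: ys'_def)
  ultimately show ?thesis using ij by (intro exI[of _ xs] exI[of _ ys']) auto
qed




lemma TP_mono:
  assumes T: "TP w m xs ys"
  shows "mono_twins w (set xs) (set ys) \<and> card (set xs) = m"
proof -
  note F = TP_facts[OF T]
  have sx: "sorted_wrt (<) xs" and sy: "sorted_wrt (<) ys" using T by (auto simp: TP_def)
  have bx: "set xs \<subseteq> {..<length w}"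
  proof
    fix x assume "x \<in> set xs"
    then obtain t where t: "t < m" "x = xs!t" using F(1) by (metis in_set_conv_nth)
    have "ys!t \<in> set ys" using t F(2) by simp
    then show "x \<in> {..<length w}" using F(5)[OF t(1)] F(8) t by auto
  qed
  have "map (nth w) xs = map (nth w) ys"
    by (rule nth_equalityI) (use F in auto)
  then have "nths w (set xs) = nths w (set ys)"
    using nths_set_strict[OF sx bx] nths_set_strict[OF sy F(8)] by simp
  then have tw: "twins w (set xs) (set ys)" using bx F(7,8) by (simp add: twins_def)
  have c: "card (set xs) = m" using sx F(1) by (simp add: strict_sorted_iff distinct_card)
  show ?thesis unfolding mono_twins_def using tw c sls_set_strict[OF sx] sls_set_strict[OF sy] F(5)
    by simp
qed

lemma exists_TP:
  assumes m: "0 < m" and L: "LT w \<ge> m"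
  shows "\<exists>xs ys. TP w m xs ys"
proof -
  let ?S = "{card I | I J. twins w I J}"
  have "?S \<subseteq> {..length w}"
  proof
    fix c assume "c \<in> ?S"
    then obtain I J where "c = card I" "twins w I J" by auto
    then have "I \<subseteq> {..<length w}" by (simp add: twins_def)
    then have "card I \<le> length w" using card_mono[of "{..<length w}" I] by simp
    then show "c \<in> {..length w}" using \<open>c = card I\<close> by simp
  qed
  then have fin: "finite ?S" by (rule finite_subset) simp
  have "twins w {} {}" by (simp add: twins_def)
  then have ne: "?S \<noteq> {}" by blast
  have "LT w \<in> ?S" unfolding LT_def using Max_in[OF fin ne] .
  then obtain I J where tw: "twins w I J" and cI: "card I = LT w" by auto
  have Is: "I \<subseteq> {..<length w}" and Js: "J \<subseteq> {..<length w}" and dj: "I \<inter> J = {}"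
    and eq: "nths w I = nths w J" using tw by (auto simp: twins_def)
  have fI: "finite I" and fJ: "finite J" using Is Js finite_subset by auto
  have "length (nths w I) = card I" unfolding length_nths using Is
    by (metis (no_types, lifting) Collect_cong lessThan_iff subsetD Collect_mem_eq)
  moreover have "length (nths w J) = card J" unfolding length_nths using Js
    by (metis (no_types, lifting) Collect_cong lessThan_iff subsetD Collect_mem_eq)
  ultimately have cJ: "card J = card I" using eq by simp
  define xs0 where "xs0 = sorted_list_of_set I"
  define ys0 where "ys0 = sorted_list_of_set J"
  have sx0: "sorted_wrt (<) xs0" and sy0: "sorted_wrt (<) ys0"
    unfolding xs0_def ys0_def using strict_sorted_list_of_set by auto
  have setx0: "set xs0 = I" and sety0: "set ys0 = J" using fI fJ by (auto simp: xs0_def ys0_def)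
  have lx0: "length xs0 = card I" and ly0: "length ys0 = card I" using cJ by (auto simp: xs0_def ys0_def)
  have "map (nth w) xs0 = map (nth w) ys0"
    using nths_set_strict[OF sx0, of w] nths_set_strict[OF sy0, of w] setx0 sety0 Is Js eq by simp
  then have weq: "\<And>t. t < card I \<Longrightarrow> w!(xs0!t) = w!(ys0!t)"
    using lx0 ly0 by (metis nth_map)
  have mI: "m \<le> card I" using L cI by simp
  have hx: "\<And>a b. a < b \<Longrightarrow> b < card I \<Longrightarrow> xs0!a < xs0!b" using sx0 lx0 by (auto simp: sorted_wrt_iff_nth_less)
  have hy: "\<And>a b. a < b \<Longrightarrow> b < card I \<Longrightarrow> ys0!a < ys0!b" using sy0 ly0 by (auto simp: sorted_wrt_iff_nth_less)
  have hx2: "\<And>a b. a < card I \<Longrightarrow> b < card I \<Longrightarrow> xs0!a = xs0!b \<Longrightarrow> a = b" by (metis hx less_irrefl nat_neq_iff)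
  have hy2: "\<And>a b. a < card I \<Longrightarrow> b < card I \<Longrightarrow> ys0!a = ys0!b \<Longrightarrow> a = b" by (metis hy less_irrefl nat_neq_iff)
  have d2: "\<And>a b. a < card I \<Longrightarrow> b < card I \<Longrightarrow> xs0!a \<noteq> ys0!b"
    using dj setx0 sety0 lx0 ly0 by (metis disjoint_iff nth_mem)
  have bY: "\<And>a. a < card I \<Longrightarrow> ys0!a < length w" using Js sety0 ly0 by (metis lessThan_iff nth_mem subsetD)
  have bX: "\<And>a. a < card I \<Longrightarrow> xs0!a < length w" using Is setx0 lx0 by (metis lessThan_iff nth_mem subsetD)
  define xs where "xs = map (\<lambda>t. min (xs0!t) (ys0!t)) [0..<m]"
  define ys where "ys = map (\<lambda>t. max (xs0!t) (ys0!t)) [0..<m]"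
  have lx: "length xs = m" and ly: "length ys = m" by (auto simp: xs_def ys_def)
  have nx: "\<And>t. t < m \<Longrightarrow> xs!t = min (xs0!t) (ys0!t)" by (simp add: xs_def)
  have ny: "\<And>t. t < m \<Longrightarrow> ys!t = max (xs0!t) (ys0!t)" by (simp add: ys_def)
  have "sorted_wrt (<) xs" unfolding sorted_wrt_iff_nth_less lx
  proof (intro allI impI)
    fix a b assume "a < b" "b < m"
    then show "xs!a < xs!b" using nx hx[of a b] hy[of a b] mI by (simp add: min_def)
  qed
  moreover have "sorted_wrt (<) ys" unfolding sorted_wrt_iff_nth_less ly
  proof (intro allI impI)
    fix a b assume "a < b" "b < m"
    then show "ys!a < ys!b" using ny hx[of a b] hy[of a b] mI by (simp add: max_def)
  qed
  moreover have "\<forall>t<m. xs!t < ys!t \<and> w!(xs!t) = w!(ys!t)"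
  proof (intro allI impI)
    fix t assume t: "t < m"
    then have t': "t < card I" using mI by simp
    show "xs!t < ys!t \<and> w!(xs!t) = w!(ys!t)"
      using nx[OF t] ny[OF t] d2[OF t' t'] weq[OF t'] by (auto simp: min_def max_def)
  qed
  moreover have "set xs \<inter> set ys = {}"
  proof -
    have "\<And>a b. a < m \<Longrightarrow> b < m \<Longrightarrow> xs!a \<noteq> ys!b"
    proof -
      fix a b assume ab: "a < m" "b < m"
      then have ab': "a < card I" "b < card I" using mI by auto
      show "xs!a \<noteq> ys!b"
      proof (cases "a = b")
        case True
        then show ?thesis using nx[OF ab(1)] ny[OF ab(2)] d2[OF ab'(1) ab'(1)] by (auto simp: min_def max_def)
      next
        case False
        then have "xs0!a \<noteq> xs0!b" "ys0!a \<noteq> ys0!b" using hx2[OF ab'] hy2[OF ab'] by auto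
        moreover have "xs0!a \<noteq> ys0!b" "ys0!a \<noteq> xs0!b" using d2[OF ab'] d2[OF ab'(2) ab'(1)] by auto
        ultimately show ?thesis using nx[OF ab(1)] ny[OF ab(2)] by (auto simp: min_def max_def)
      qed
    qed
    then show ?thesis using lx ly by (metis disjoint_iff in_set_conv_nth)
  qed
  moreover have "set ys \<subseteq> {..<length w}"
  proof
    fix y assume "y \<in> set ys"
    then obtain t where t: "t < m" "y = ys!t" using ly by (metis in_set_conv_nth)
    then have t': "t < card I" using mI by simp
    show "y \<in> {..<length w}" using ny[OF t(1)] t bX[OF t'] bY[OF t'] by (simp add: max_def)
  qed
  ultimately have "TP w m xs ys" using lx ly by (simp add: TP_def)
  then show ?thesis by blast
qed


theorem lemma18:
  fixes w :: "nat list" and k n m :: nat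
  assumes "length w = n" and "set w \<subseteq> {1..k}"
    and "0 < m" and "LT w \<ge> m"
  shows "\<exists>I J. regular_twins w I J \<and> card I = m"
proof -
  define B where "B = m * length w"
  define N where "N = B + 1"
  define g where "g = (\<lambda>pr. N * (sum_list (fst pr) + sum_list (snd pr)) + (B - sum_list (fst pr)))"
  define P where "P = (\<lambda>pr. TP w m (fst pr) (snd pr))"
  have sb: "sum_list xs \<le> B \<and> sum_list ys \<le> B" if T: "TP w m xs ys" for xs ys
  proof -
    note F = TP_facts[OF T]
    have "\<forall>y\<in>set ys. y \<le> length w" using F(8) by auto
    then have y: "sum_list ys \<le> B" using sum_list_le[of ys "length w"] F(2) by (simp add: B_def)
    have "\<forall>x\<in>set xs. x \<le> length w"
    proof
      fix x assume "x \<in> set xs"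
      then obtain t where t: "t < m" "x = xs!t" using F(1) by (metis in_set_conv_nth)
      have "ys!t \<in> set ys" using t F(2) by simp
      then show "x \<le> length w" using F(5)[OF t(1)] F(8) t by auto
    qed
    then have "sum_list xs \<le> B" using sum_list_le[of xs "length w"] F(1) by (simp add: B_def)
    with y show ?thesis by simp
  qed
  obtain xs0 ys0 where "TP w m xs0 ys0" using exists_TP assms(3,4) by blast
  then have P0: "P (xs0, ys0)" by (simp add: P_def)
  have bound: "\<forall>y. P y \<longrightarrow> g y < N * (2 * B) + B + 1"
  proof (intro allI impI)
    fix y assume "P y"
    then have "sum_list (fst y) \<le> B" "sum_list (snd y) \<le> B" using sb by (auto simp: P_def)
    then have "N * (sum_list (fst y) + sum_list (snd y)) \<le> N * (2 * B)" by simp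
    moreover have "B - sum_list (fst y) \<le> B" by simp
    ultimately show "g y < N * (2 * B) + B + 1" unfolding g_def by linarith
  qed
  obtain pr where Ppr: "P pr" and mx: "\<forall>y. P y \<longrightarrow> g y \<le> g pr"
    using Lattices_Big.ex_has_greatest_nat[OF P0 bound] by blast
  obtain xs ys where pr: "pr = (xs, ys)" by (cases pr)
  have T: "TP w m xs ys" using Ppr pr by (simp add: P_def)
  have sbx: "sum_list xs \<le> B" using sb[OF T] by simp
  have mx2: "g (xs', ys') \<le> g (xs, ys)" if "TP w m xs' ys'" for xs' ys'
    using mx that pr by (simp add: P_def)
  have mt: "mono_twins w (set xs) (set ys)" and c: "card (set xs) = m" using TP_mono[OF T] by auto
  have Rw2: "Rw (set xs) (set ys) i = 2 \<longleftrightarrow> i \<notin> set xs \<and> i \<in> set ys" for i by (simp add: Rw_def)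
  have Rw1: "Rw (set xs) (set ys) i = 1 \<longleftrightarrow> i \<in> set xs" for i by (simp add: Rw_def)
  have Rw0: "Rw (set xs) (set ys) i = 0 \<longleftrightarrow> i \<notin> set xs \<and> i \<notin> set ys" for i by (simp add: Rw_def)
  have Rw12: "Rw (set xs) (set ys) i \<in> {1,2} \<longleftrightarrow> i \<in> set xs \<or> i \<in> set ys" for i by (simp add: Rw_def)
  have A: "\<not> (\<exists>i j. i < j \<and> j < length w \<and> Rw (set xs) (set ys) i = 2 \<and> Rw (set xs) (set ys) j = 1 \<and>
            (\<forall>k. i < k \<and> k < j \<longrightarrow> Rw (set xs) (set ys) k = 0) \<and> w ! i = w ! j)"
  proof
    assume "\<exists>i j. i < j \<and> j < length w \<and> Rw (set xs) (set ys) i = 2 \<and> Rw (set xs) (set ys) j = 1 \<and>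
            (\<forall>k. i < k \<and> k < j \<longrightarrow> Rw (set xs) (set ys) k = 0) \<and> w ! i = w ! j"
    then obtain i j where ij: "i < j" "j < length w" "i \<notin> set xs" "i \<in> set ys" "j \<in> set xs"
      "\<forall>k. i < k \<and> k < j \<longrightarrow> k \<notin> set xs \<and> k \<notin> set ys" "w!i = w!j"
      unfolding Rw2 Rw1 Rw0 by blast
    obtain xs' ys' where T': "TP w m xs' ys'" and e: "sum_list xs' + sum_list ys' = sum_list xs + sum_list ys"
      and l: "sum_list xs' < sum_list xs" using swap_a[OF T ij] by blast
    have "g (xs, ys) < g (xs', ys')" using e l sbx by (simp add: g_def)
    then show False using mx2[OF T'] by simp
  qed
  have Bb: "\<not> (\<exists>i j. i < j \<and> j < length w \<and> Rw (set xs) (set ys) i \<in> {1, 2} \<and> Rw (set xs) (set ys) j = 0 \<and>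
            (\<forall>k. i < k \<and> k < j \<longrightarrow> Rw (set xs) (set ys) k = 0) \<and> w ! i = w ! j)"
  proof
    assume "\<exists>i j. i < j \<and> j < length w \<and> Rw (set xs) (set ys) i \<in> {1, 2} \<and> Rw (set xs) (set ys) j = 0 \<and>
            (\<forall>k. i < k \<and> k < j \<longrightarrow> Rw (set xs) (set ys) k = 0) \<and> w ! i = w ! j"
    then obtain i j where ij: "i < j" "j < length w" "i \<in> set xs \<or> i \<in> set ys" "j \<notin> set xs" "j \<notin> set ys"
      "\<forall>k. i < k \<and> k < j \<longrightarrow> k \<notin> set xs \<and> k \<notin> set ys" "w!i = w!j"
      unfolding Rw12 Rw0 by blast
    obtain xs' ys' where T': "TP w m xs' ys'" and e: "sum_list xs' + sum_list ys' > sum_list xs + sum_list ys"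
      using ij(3) swap_b1[OF T ij(1,2) _ ij(4-7)] swap_b2[OF T ij(1,2) _ ij(4-7)] by blast
    have "N * (sum_list xs + sum_list ys) + N \<le> N * (sum_list xs' + sum_list ys')"
      using e mult_le_mono2[of "Suc (sum_list xs + sum_list ys)" "sum_list xs' + sum_list ys'" N] by simp
    then have "g (xs, ys) < g (xs', ys')" using sbx by (simp add: g_def N_def)
    then show False using mx2[OF T'] by simp
  qed
  have "regular_twins w (set xs) (set ys)" unfolding regular_twins_def using mt A Bb by blast
  then show ?thesis using c by blast
qed


end
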